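(* Let $K\hat N^\infty_*=\bigoplus_{n\ge1}K\hat N^n$ and define the bilinear product $\vec v\star\vec w=\sum_{\vec t}\vec t$, the sum over all $\vec t\in\hat N^{n+m}$ with $\vec v\nearrow\vec w\le\vec t\le\vec v\nwarrow\vec w$ (componentwise), for $\vec v\in\hat N^n,\vec w\in\hat N^m$, $n,m\ge1$. Then $\star$ is associative, and for all $\vec u\in\hat N^p,\vec v\in\hat N^n,\vec w\in\hat N^m$, $\vec u\star\vec v\star\vec w=\sum_{\vec t}\vec t$ over all $\vec t\in\hat N^{p+n+m}$ with $\vec u\nearrow\vec v\nearrow\vec w\le\vec t\le\vec u\nwarrow\vec v\nwarrow\vec w$. Moreover, extending by $\vec v\star()=\vec v=()\star\vec v$ with $()$ the empty vector, $()$ is a unit.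
   Context: $K$ is a field of characteristic zero. $\hat N^n$ ($n\ge1$) is the set of names of planar rooted binary trees with $n$ internal vertices: writing a tree as a complete expression (full binary parenthesization, outermost product included) of $x_1\cdots x_{n+1}$, its name $\vec v\in\mathbb N^n$ has $v_i=i$ if at least one left parenthesis stands immediately left of $x_i$, and otherwise $v_i=j$ where the rightmost of the right parentheses immediately following $x_i$ matches a left parenthesis in the run immediately preceding $x_j$. $\hat N^0=\{()\}$. For $\vec v\in\hat N^n,\vec w\in\hat N^m$: $\vec v\nearrow\vec w=(\vec v,n\triangleright w_1,\dots,n\triangleright w_m)$ with $n\triangleright a=a+n$ for $a\ne1$ and $n\triangleright1=1$; $\vec v\nwarrow\vec w=(v_1,\dots,v_n,w_1+n,\dots,w_m+n)$. Both are associative. Componentwise order: $\vec v\le\vec w$ iff $v_i\le w_i$ for all $i$. *)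

theory Defs
  imports Main
begin

text \<open>Planar rooted binary trees; leaves are the variables x_1,...,x_(n+1).\<close>
datatype ptree = Leaf | Node ptree ptree

fun internal :: "ptree \<Rightarrow> nat" where
  "internal Leaf = 0"
| "internal (Node l r) = internal l + internal r + 1"

definition leaves :: "ptree \<Rightarrow> nat" where
  "leaves t = internal t + 1"

text \<open>Each internal vertex contributes one pair of matching parentheses in the complete
  expression: its left parenthesis stands (in the run) immediately before x_a and its
  right parenthesis (in the run) immediately after x_b, where a..b are the leaves below it.
  spans k t lists these pairs (a,b), the leaves of t being numbered from k.\<close>
fun spans :: "nat \<Rightarrow> ptree \<Rightarrow> (nat \<times> nat) set" where
  "spans k Leaf = {}"
| "spans k (Node l r) =
     insert (k, k + leaves (Node l r) - 1) (spans k l \<union> spans (k + leaves l) r)"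

text \<open>Name of a tree: v_i = i if some left parenthesis stands immediately left of x_i;
  otherwise the rightmost right parenthesis after x_i belongs to the outermost vertex (a,i),
  i.e. the one with the smallest a, whose left parenthesis stands before x_a, so v_i = a.\<close>
definition tree_name :: "ptree \<Rightarrow> nat list" where
  "tree_name t = map (\<lambda>i. if (\<exists>b. (i, b) \<in> spans 1 t) then i
                           else Min {a. (a, i) \<in> spans 1 t}) [1..<internal t + 1]"

definition Nhat :: "nat \<Rightarrow> nat list set" where
  "Nhat n = {tree_name t | t. internal t = n}"

definition tri :: "nat \<Rightarrow> nat \<Rightarrow> nat" where
  "tri n a = (if a = 1 then 1 else a + n)"

definition nearrow :: "nat list \<Rightarrow> nat list \<Rightarrow> nat list" where
  "nearrow v w = v @ map (tri (length v)) w"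

definition nwarrow :: "nat list \<Rightarrow> nat list \<Rightarrow> nat list" where
  "nwarrow v w = v @ map (\<lambda>a. a + length v) w"

definition cle :: "nat list \<Rightarrow> nat list \<Rightarrow> bool" where
  "cle v w = list_all2 (\<le>) v w"

text \<open>Elements of the vector space: finitely supported K-valued functions on names.\<close>
definition in_span :: "nat set \<Rightarrow> (nat list \<Rightarrow> 'k::zero) \<Rightarrow> bool" where
  "in_span D f = (finite {x. f x \<noteq> 0} \<and> (\<forall>x. f x \<noteq> 0 \<longrightarrow> x \<in> (\<Union>n\<in>D. Nhat n)))"

definition basis :: "nat list \<Rightarrow> nat list \<Rightarrow> 'k::{zero,one}" where
  "basis v = (\<lambda>t. if t = v then 1 else 0)"

definition starB :: "nat list \<Rightarrow> nat list \<Rightarrow> nat list \<Rightarrow> 'k::{zero,one}" where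
  "starB v w = (if v = [] then basis w else if w = [] then basis v else
      (\<lambda>t. if t \<in> Nhat (length v + length w) \<and> cle (nearrow v w) t \<and> cle t (nwarrow v w)
           then 1 else 0))"

definition star :: "(nat list \<Rightarrow> 'k::comm_ring_1) \<Rightarrow> (nat list \<Rightarrow> 'k) \<Rightarrow> nat list \<Rightarrow> 'k" where
  "star f g = (\<lambda>t. \<Sum>v\<in>{v. f v \<noteq> 0}. \<Sum>w\<in>{w. g w \<noteq> 0}. f v * g w * starB v w t)"

end

theory Submission
  imports Defs
begin


fun nm :: "ptree \<Rightarrow> nat list" where
  "nm Leaf = []"
| "nm (Node l r) = nm l @ [1] @ map (\<lambda>x. x + (internal l + 1)) (nm r)"

lemma internal0: "internal t = 0 \<longleftrightarrow> t = Leaf"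
  by (cases t) auto

lemma spans_bd: "(x, y) \<in> spans k t \<Longrightarrow> k \<le> x \<and> x < y \<and> y \<le> k + internal t"
  by (induction t arbitrary: k) (auto simp: leaves_def, fastforce+)

lemma spans_root: "t \<noteq> Leaf \<Longrightarrow> (k, k + internal t) \<in> spans k t"
  by (cases t) (auto simp: leaves_def)

lemma spans_fin: "finite (spans k t)"
  by (induction t arbitrary: k) auto

lemma nmk: "map (\<lambda>i. if (\<exists>b. (i, b) \<in> spans (Suc j) t) then i
     else Min {a. (a, i) \<in> spans (Suc j) t}) [Suc j..<Suc j + internal t] = map (\<lambda>x. x + j) (nm t)"
proof (induction t arbitrary: j)
  case Leaf
  then show ?case by simp
next
  case (Node l r)
  define k where "k = Suc j"
  define a where "a = internal l"
  define b where "b = internal r"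
  define S where "S = spans k (Node l r)"
  have S: "S = insert (k, k + a + b + 1) (spans k l \<union> spans (k + a + 1) r)"
    by (simp add: S_def a_def b_def leaves_def add.assoc)
  define F where "F = (\<lambda>i. if (\<exists>b. (i, b) \<in> S) then i else Min {a. (a, i) \<in> S})"
  define Fl where "Fl = (\<lambda>i. if (\<exists>b. (i, b) \<in> spans k l) then i else Min {a. (a, i) \<in> spans k l})"
  define Fr where "Fr = (\<lambda>i. if (\<exists>b. (i, b) \<in> spans (k+a+1) r) then i else Min {z. (z, i) \<in> spans (k+a+1) r})"
  have upt: "[k..<k + internal (Node l r)] = [k..<k+a] @ [k+a] @ [k+a+1..<k+a+1+b]"
  proof -
    have "[k..<k + internal (Node l r)] = [k..<k+a] @ [k+a..<k+a+(1+b)]"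
      using upt_add_eq_append[of k "k+a" "1+b"] by (simp add: a_def b_def add.assoc)
    also have "[k+a..<k+a+(1+b)] = [k+a] @ [k+a+1..<k+a+1+b]"
      by (simp add: upt_rec)
    finally show ?thesis .
  qed
  have p1: "F i = Fl i" if "i \<in> set [k..<k+a]" for i
  proof -
    from that have i: "k \<le> i" "i < k + a" by auto
    have e: "(\<exists>b. (i, b) \<in> S) \<longleftrightarrow> (\<exists>b. (i, b) \<in> spans k l)"
    proof
      assume "\<exists>b. (i, b) \<in> S"
      then obtain c where c: "(i, c) \<in> S" by blast
      show "\<exists>b. (i, b) \<in> spans k l"
      proof (cases "i = k")
        case True
        have "l \<noteq> Leaf" using i internal0 a_def by fastforce
        then show ?thesis using spans_root True by blast
      next
        case False
        then show ?thesis using c i S spans_bd[of i c "k+a+1" r] by auto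
      qed
    qed (auto simp: S)
    have e2: "{x. (x, i) \<in> S} = {x. (x, i) \<in> spans k l}"
      using i S spans_bd[of _ i "k+a+1" r] by fastforce
    show ?thesis unfolding F_def Fl_def using e e2 by simp
  qed
  have p2: "F (k+a) = k"
  proof (cases "a = 0")
    case True
    then show ?thesis unfolding F_def S by auto
  next
    case False
    then have lnl: "l \<noteq> Leaf" using a_def by auto
    have "\<not> (\<exists>b. (k+a, b) \<in> S)"
      using False S spans_bd[of "k+a" _ k l] spans_bd[of "k+a" _ "k+a+1" r] a_def by fastforce
    moreover have "Min {x. (x, k+a) \<in> S} = k"
    proof (rule Min_eqI)
      have "{x. (x, k+a) \<in> S} \<subseteq> fst ` S" by force
      moreover have "finite S" unfolding S_def by (rule spans_fin)
      ultimately show "finite {x. (x, k+a) \<in> S}" by (meson finite_surj)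
      show "k \<in> {x. (x, k+a) \<in> S}" using spans_root[OF lnl, of k] S a_def by auto
      show "k \<le> y" if "y \<in> {x. (x, k+a) \<in> S}" for y
        using that S spans_bd[of y "k+a" k l] spans_bd[of y "k+a" "k+a+1" r] by auto
    qed
    ultimately show ?thesis unfolding F_def by simp
  qed
  have p3: "F i = Fr i" if "i \<in> set [k+a+1..<k+a+1+b]" for i
  proof -
    from that have i: "k+a+1 \<le> i" "i < k + a + 1 + b" by auto
    have e: "(\<exists>c. (i, c) \<in> S) \<longleftrightarrow> (\<exists>c. (i, c) \<in> spans (k+a+1) r)"
      using i S spans_bd[of i _ k l] a_def by fastforce
    have e2: "{x. (x, i) \<in> S} = {x. (x, i) \<in> spans (k+a+1) r}"
      using i S spans_bd[of _ i k l] a_def by auto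
    show ?thesis unfolding F_def Fr_def using e e2 by simp
  qed
  have IHl: "map Fl [k..<k+a] = map (\<lambda>x. x + j) (nm l)"
    unfolding Fl_def k_def a_def by (rule Node.IH(1))
  have IHr: "map Fr [k+a+1..<k+a+1+b] = map (\<lambda>x. x + (j+a+1)) (nm r)"
  proof -
    have e: "k+a+1 = Suc (j+a+1)" by (simp add: k_def)
    show ?thesis unfolding Fr_def b_def e by (rule Node.IH(2))
  qed
  have "map F [k..<k + internal (Node l r)] = map Fl [k..<k+a] @ [k] @ map Fr [k+a+1..<k+a+1+b]"
    unfolding upt using p1 p2 p3 by simp
  also have "\<dots> = map (\<lambda>x. x + j) (nm (Node l r))"
    using IHl IHr by (simp add: k_def a_def add.assoc)
  finally show ?case unfolding F_def S_def k_def .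
qed

lemma tree_name_nm: "tree_name t = nm t"
proof -
  have "[1..<internal t + 1] = [Suc 0..<Suc 0 + internal t]" by simp
  then show ?thesis using nmk[of 0 t] unfolding tree_name_def by (simp only: One_nat_def) simp
qed



lemma nm_len: "length (nm t) = internal t"
  by (induction t) auto

lemma nm_set: "set (nm t) \<subseteq> {1..internal t}"
  by (induction t) auto

lemma nm_take: "k \<le> internal t \<Longrightarrow> \<exists>t'. internal t' = k \<and> nm t' = take k (nm t)"
proof (induction t arbitrary: k)
  case Leaf
  then show ?case by (intro exI[of _ Leaf]) auto
next
  case (Node l r)
  show ?case
  proof (cases "k \<le> internal l")
    case True
    then obtain l' where "internal l' = k" "nm l' = take k (nm l)" using Node.IH(1) by blast
    then show ?thesis using True by (intro exI[of _ l']) (simp add: nm_len)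
  next
    case False
    then obtain j where j: "k = internal l + 1 + j" by (metis add.commute add_Suc_right le_Suc_ex not_less_eq_eq plus_1_eq_Suc)
    then have "j \<le> internal r" using Node.prems by simp
    then obtain r' where r': "internal r' = j" "nm r' = take j (nm r)" using Node.IH(2) by blast
    show ?thesis using j r' by (intro exI[of _ "Node l r'"]) (simp add: nm_len take_map)
  qed
qed

definition fp :: "nat \<Rightarrow> nat \<Rightarrow> nat" where
  "fp p x = (if x \<le> p + 1 then 1 else x - p)"

lemma nm_drop: "p \<le> internal t \<Longrightarrow> \<exists>t'. internal t' = internal t - p \<and> nm t' = map (fp p) (drop p (nm t))"
proof (induction t arbitrary: p)
  case Leaf
  then show ?case by (intro exI[of _ Leaf]) auto
next
  case (Node l r)
  show ?case
  proof (cases "p \<le> internal l")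
    case True
    then obtain l' where l': "internal l' = internal l - p" "nm l' = map (fp p) (drop p (nm l))" using Node.IH(1) by blast
    have "map (\<lambda>x. fp p (x + (internal l + 1))) (nm r) = map (\<lambda>x. x + (internal l' + 1)) (nm r)"
    proof (rule map_cong[OF refl])
      fix x assume "x \<in> set (nm r)"
      then have "x \<ge> 1" using nm_set by fastforce
      then show "fp p (x + (internal l + 1)) = x + (internal l' + 1)" using True l'(1) by (simp add: fp_def)
    qed
    then show ?thesis using True l' by (intro exI[of _ "Node l' r"]) (simp add: nm_len fp_def o_def)
  next
    case False
    then obtain q where q: "p = internal l + 1 + q" by (metis add.commute add_Suc_right le_Suc_ex not_less_eq_eq plus_1_eq_Suc)
    then have "q \<le> internal r" using Node.prems by simp
    then obtain r' where r': "internal r' = internal r - q" "nm r' = map (fp q) (drop q (nm r))" using Node.IH(2) by blast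
    have "map (fp p) (drop p (nm (Node l r))) = map (\<lambda>x. fp p (x + (internal l + 1))) (drop q (nm r))"
      using q by (simp add: nm_len drop_map)
    also have "\<dots> = map (fp q) (drop q (nm r))"
      using q by (intro map_cong[OF refl]) (simp add: fp_def)
    finally show ?thesis using q r' by (intro exI[of _ r']) simp
  qed
qed

lemma Nhat_nm: "Nhat n = {nm t | t. internal t = n}"
  by (simp add: Nhat_def tree_name_nm)

lemma Nhat_len: "s \<in> Nhat n \<Longrightarrow> length s = n"
  by (auto simp: Nhat_nm nm_len)

lemma Nhat_set: "s \<in> Nhat n \<Longrightarrow> set s \<subseteq> {1..n}"
  using nm_set by (auto simp: Nhat_nm)

lemma Nhat_ge1: "s \<in> Nhat n \<Longrightarrow> x \<in> set s \<Longrightarrow> 1 \<le> x"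
  using Nhat_set by fastforce

lemma Nhat_fin: "finite (Nhat n)"
proof (rule finite_subset)
  show "Nhat n \<subseteq> {xs. set xs \<subseteq> {0..n} \<and> length xs = n}"
    using Nhat_set Nhat_len by fastforce
  show "finite {xs. set xs \<subseteq> {0..n} \<and> length xs = n}"
    by (rule finite_lists_length_eq) simp
qed

lemma Nhat_take: "s \<in> Nhat (k + m) \<Longrightarrow> take k s \<in> Nhat k"
proof -
  assume "s \<in> Nhat (k + m)"
  then obtain t where "internal t = k + m" "s = nm t" by (auto simp: Nhat_nm)
  then obtain t' where "internal t' = k" "nm t' = take k s" using nm_take[of k t] by auto
  then show ?thesis unfolding Nhat_nm by (metis (mono_tags, lifting) mem_Collect_eq)
qed

lemma Nhat_drop: "s \<in> Nhat (p + k) \<Longrightarrow> map (fp p) (drop p s) \<in> Nhat k"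
proof -
  assume "s \<in> Nhat (p + k)"
  then obtain t where "internal t = p + k" "s = nm t" by (auto simp: Nhat_nm)
  then obtain t' where "internal t' = k" "nm t' = map (fp p) (drop p s)" using nm_drop[of p t] by auto
  then show ?thesis unfolding Nhat_nm by (metis (mono_tags, lifting) mem_Collect_eq)
qed



definition Iv :: "nat list \<Rightarrow> nat list \<Rightarrow> nat list \<Rightarrow> bool" where
  "Iv a b y = (y \<in> Nhat (length a + length b) \<and> cle (nearrow a b) y \<and> cle y (nwarrow a b))"

definition T3 :: "nat list \<Rightarrow> nat list \<Rightarrow> nat list \<Rightarrow> nat list \<Rightarrow> bool" where
  "T3 u v w t = (t \<in> Nhat (length u + length v + length w) \<and> cle (nearrow (nearrow u v) w) t
     \<and> cle t (nwarrow (nwarrow u v) w))"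

lemma cle_app_l: "cle (a @ b) t \<longleftrightarrow> length t = length a + length b \<and> cle a (take (length a) t) \<and> cle b (drop (length a) t)"
  unfolding cle_def list_all2_append1
  by (metis append_eq_conv_conj length_append list_all2_lengthD)

lemma cle_app_r: "cle t (a @ b) \<longleftrightarrow> length t = length a + length b \<and> cle (take (length a) t) a \<and> cle (drop (length a) t) b"
  unfolding cle_def list_all2_append2
  by (metis append_eq_conv_conj length_append list_all2_lengthD)

lemma cle_len: "cle a b \<Longrightarrow> length a = length b"
  unfolding cle_def by (rule list_all2_lengthD)

lemma cle_antisym: "cle a b \<Longrightarrow> cle b a \<Longrightarrow> a = b"
  unfolding cle_def list_all2_conv_all_nth by (metis nth_equalityI le_antisym)

lemma cle_trans: "cle a b \<Longrightarrow> cle b c \<Longrightarrow> cle a c"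
  unfolding cle_def list_all2_conv_all_nth by (metis le_trans)

lemma tri_tri: "1 \<le> a \<Longrightarrow> tri p (tri n a) = tri (p + n) a"
  by (simp add: tri_def)

lemma nearrow_assoc: "\<forall>a\<in>set x. 1 \<le> a \<Longrightarrow> nearrow (nearrow v w) x = nearrow v (nearrow w x)"
  unfolding nearrow_def by (simp add: tri_tri add.commute)

lemma nwarrow_assoc: "nwarrow (nwarrow v w) x = nwarrow v (nwarrow w x)"
  unfolding nwarrow_def by (simp add: add.assoc add.commute)

lemma nearrow_ge1: "\<forall>a\<in>set w. 1 \<le> a \<Longrightarrow> \<forall>a\<in>set x. 1 \<le> a \<Longrightarrow> \<forall>a\<in>set (nearrow w x). 1 \<le> a"
  unfolding nearrow_def by (auto simp: tri_def)


lemma nwarrow_ge1': "\<forall>a\<in>set w. 1 \<le> a \<Longrightarrow> \<forall>a\<in>set x. 1 \<le> a \<Longrightarrow> \<forall>a\<in>set (nwarrow w x). 1 \<le> a"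
  unfolding nwarrow_def by auto

lemma cle_nth: "cle a b \<longleftrightarrow> length a = length b \<and> (\<forall>i<length a. a!i \<le> b!i)"
  by (simp add: cle_def list_all2_conv_all_nth)

lemma L1: "\<forall>a\<in>set y. 1 \<le> a \<Longrightarrow> cle (map (tri p) y) d \<Longrightarrow> cle d (map (\<lambda>a. a + p) y) \<Longrightarrow> y = map (fp p) d"
proof -
  assume g: "\<forall>a\<in>set y. 1 \<le> a" and c1: "cle (map (tri p) y) d" and c2: "cle d (map (\<lambda>a. a + p) y)"
  have len: "length d = length y" using c1 by (simp add: cle_nth)
  show ?thesis
  proof (rule nth_equalityI)
    show "length y = length (map (fp p) d)" using len by simp
    fix i assume i: "i < length y"
    have "1 \<le> y!i" using g i by simp
    moreover have "tri p (y!i) \<le> d!i" using c1 i by (simp add: cle_nth)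
    moreover have "d!i \<le> y!i + p" using c2 i len by (simp add: cle_nth)
    ultimately show "y ! i = map (fp p) d ! i" using i len
      by (cases "y!i = 1") (auto simp: tri_def fp_def)
  qed
qed

lemma L2: "\<forall>a\<in>set A. 1 \<le> a \<Longrightarrow> cle A B \<Longrightarrow> cle (map (tri p) A) (map (tri p) B)"
proof -
  assume g: "\<forall>a\<in>set A. 1 \<le> a" and c: "cle A B"
  have len: "length A = length B" using c by (simp add: cle_nth)
  have "tri p (A!i) \<le> tri p (B!i)" if i: "i < length A" for i
  proof -
    have "1 \<le> A!i" using g i by simp
    moreover have "A!i \<le> B!i" using c i by (simp add: cle_nth)
    ultimately show ?thesis by (cases "A!i = 1") (auto simp: tri_def)
  qed
  then show ?thesis using len by (simp add: cle_nth)
qed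

lemma L2': "cle A B \<Longrightarrow> cle (map (\<lambda>a. a + p) A) (map (\<lambda>a. a + p) B)"
  by (simp add: cle_nth)

lemma L3: "\<forall>a\<in>set A. 1 \<le> a \<Longrightarrow> \<forall>a\<in>set B. 1 \<le> a \<Longrightarrow> cle (map (tri p) A) d \<Longrightarrow> cle d (map (\<lambda>a. a + p) B)
   \<Longrightarrow> cle A (map (fp p) d) \<and> cle (map (fp p) d) B"
proof -
  assume gA: "\<forall>a\<in>set A. 1 \<le> a" and gB: "\<forall>a\<in>set B. 1 \<le> a" and c1: "cle (map (tri p) A) d"
    and c2: "cle d (map (\<lambda>a. a + p) B)"
  have len: "length d = length A" "length d = length B" using c1 c2 by (simp_all add: cle_nth)
  have "A!i \<le> fp p (d!i) \<and> fp p (d!i) \<le> B!i" if i: "i < length A" for i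
  proof -
    have "1 \<le> A!i" "1 \<le> B!i" using gA gB i len by auto
    moreover have "tri p (A!i) \<le> d!i" using c1 i by (simp add: cle_nth)
    moreover have "d!i \<le> B!i + p" using c2 i len by (simp add: cle_nth)
    ultimately show ?thesis by (cases "A!i = 1") (auto simp: tri_def fp_def)
  qed
  then show ?thesis using len by (simp add: cle_nth)
qed

lemma L4: "\<forall>a\<in>set A. 1 \<le> a \<Longrightarrow> cle (map (tri p) A) d
   \<Longrightarrow> cle (map (tri p) (map (fp p) d)) d \<and> cle d (map (\<lambda>a. a + p) (map (fp p) d))"
proof -
  assume gA: "\<forall>a\<in>set A. 1 \<le> a" and c1: "cle (map (tri p) A) d"
  have len: "length d = length A" using c1 by (simp add: cle_nth)
  have "tri p (fp p (d!i)) \<le> d!i \<and> d!i \<le> fp p (d!i) + p" if i: "i < length d" for i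
  proof -
    have "1 \<le> A!i" using gA i len by auto
    moreover have "tri p (A!i) \<le> d!i" using c1 i len by (simp add: cle_nth)
    ultimately have "1 \<le> d!i" by (auto simp: tri_def split: if_splits)
    then show ?thesis by (auto simp: tri_def fp_def)
  qed
  then show ?thesis by (simp add: cle_nth)
qed



lemma coreC: "(Iv v w y \<and> Iv y x t) \<longleftrightarrow> (T3 v w x t \<and> y = take (length v + length w) t)"
proof
  assume a: "Iv v w y \<and> Iv y x t"
  have ly: "length y = length v + length w" using a Nhat_len unfolding Iv_def by blast
  have lt: "length t = length v + length w + length x" using a Nhat_len ly unfolding Iv_def by metis
  have c1: "cle y (take (length y) t)" "cle (map (tri (length y)) x) (drop (length y) t)"
    using a unfolding Iv_def nearrow_def cle_app_l by auto
  have c2: "cle (take (length y) t) y" "cle (drop (length y) t) (map (\<lambda>a. a + length y) x)"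
    using a unfolding Iv_def nwarrow_def cle_app_r by auto
  have yt: "y = take (length v + length w) t" using cle_antisym[OF c1(1) c2(1)] ly by simp
  have "T3 v w x t"
    unfolding T3_def
  proof (intro conjI)
    show "t \<in> Nhat (length v + length w + length x)" using a ly unfolding Iv_def by simp
    show "cle (nearrow (nearrow v w) x) t"
      unfolding nearrow_def[of "nearrow v w"] cle_app_l
      using a c1 ly lt yt unfolding Iv_def by (simp add: nearrow_def)
    show "cle t (nwarrow (nwarrow v w) x)"
      unfolding nwarrow_def[of "nwarrow v w"] cle_app_r
      using a c2 ly lt yt unfolding Iv_def by (simp add: nwarrow_def)
  qed
  then show "T3 v w x t \<and> y = take (length v + length w) t" using yt by simp
next
  assume a: "T3 v w x t \<and> y = take (length v + length w) t"
  define L where "L = length v + length w"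
  have lt: "length t = L + length x" using a Nhat_len unfolding T3_def L_def by blast
  have ly: "length y = L" using a lt L_def by simp
  have c1: "cle (nearrow v w) y" "cle (map (tri L) x) (drop L t)"
    using a lt unfolding T3_def nearrow_def[of "nearrow v w"] cle_app_l L_def by (auto simp: nearrow_def)
  have c2: "cle y (nwarrow v w)" "cle (drop L t) (map (\<lambda>a. a + L) x)"
    using a lt unfolding T3_def nwarrow_def[of "nwarrow v w"] cle_app_r L_def by (auto simp: nwarrow_def)
  have yN: "y \<in> Nhat L" using a Nhat_take unfolding T3_def L_def by blast
  show "Iv v w y \<and> Iv y x t"
    unfolding Iv_def
  proof (intro conjI)
    show "y \<in> Nhat (length v + length w)" using yN L_def by simp
    show "cle (nearrow v w) y" "cle y (nwarrow v w)" by fact+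
    show "t \<in> Nhat (length y + length x)" using a ly L_def unfolding T3_def by simp
    show "cle (nearrow y x) t" unfolding nearrow_def cle_app_l using ly lt c1 a L_def
      by (simp add: cle_nth)
    show "cle t (nwarrow y x)" unfolding nwarrow_def cle_app_r using ly lt c2 a L_def
      by (simp add: cle_nth)
  qed
qed

lemma coreD:
  assumes v: "v \<in> Nhat p" and w: "w \<in> Nhat n" and x: "x \<in> Nhat m"
  shows "(Iv w x y \<and> Iv v y t) \<longleftrightarrow> (T3 v w x t \<and> y = map (fp p) (drop p t))"
proof -
  have lv: "length v = p" "length w = n" "length x = m" using v w x Nhat_len by auto
  have gw: "\<forall>a\<in>set w. 1 \<le> a" and gx: "\<forall>a\<in>set x. 1 \<le> a" using w x Nhat_ge1 by auto
  have gA: "\<forall>a\<in>set (nearrow w x). 1 \<le> a" using nearrow_ge1[OF gw gx] .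
  have gB: "\<forall>a\<in>set (nwarrow w x). 1 \<le> a" using nwarrow_ge1'[OF gw gx] .
  have lA: "length (nearrow w x) = n + m" "length (nwarrow w x) = n + m"
    using lv by (auto simp: nearrow_def nwarrow_def)
  have ne: "nearrow (nearrow v w) x = v @ map (tri p) (nearrow w x)"
    unfolding nearrow_assoc[OF gx] using lv by (simp add: nearrow_def[of v])
  have nw: "nwarrow (nwarrow v w) x = v @ map (\<lambda>a. a + p) (nwarrow w x)"
    unfolding nwarrow_assoc using lv by (simp add: nwarrow_def[of v])
  show ?thesis
  proof
    assume a: "Iv w x y \<and> Iv v y t"
    have yN: "y \<in> Nhat (n + m)" using a lv unfolding Iv_def by simp
    then have ly: "length y = n + m" by (rule Nhat_len)
    have gy: "\<forall>a\<in>set y. 1 \<le> a" using yN Nhat_ge1 by auto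
    have tN: "t \<in> Nhat (p + (n + m))" using a lv ly unfolding Iv_def by simp
    then have lt: "length t = p + (n + m)" by (rule Nhat_len)
    have c1: "cle v (take p t)" "cle (map (tri p) y) (drop p t)"
      using a lv unfolding Iv_def nearrow_def[of v] cle_app_l by auto
    have c2: "cle (take p t) v" "cle (drop p t) (map (\<lambda>a. a + p) y)"
      using a lv unfolding Iv_def nwarrow_def[of v] cle_app_r by auto
    have vt: "take p t = v" using cle_antisym[OF c2(1) c1(1)] .
    have yd: "y = map (fp p) (drop p t)" using L1[OF gy c1(2) c2(2)] .
    have "T3 v w x t" unfolding T3_def
    proof (intro conjI)
      show "t \<in> Nhat (length v + length w + length x)" using tN lv by (simp add: add.assoc)
      have "cle (map (tri p) (nearrow w x)) (drop p t)"
        using cle_trans[OF L2[OF gA] c1(2)] a unfolding Iv_def by blast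
      then show "cle (nearrow (nearrow v w) x) t"
        unfolding ne cle_app_l using lt lv lA vt by (simp add: cle_nth)
      have "cle (drop p t) (map (\<lambda>a. a + p) (nwarrow w x))"
        using cle_trans[OF c2(2) L2'] a unfolding Iv_def by blast
      then show "cle t (nwarrow (nwarrow v w) x)"
        unfolding nw cle_app_r using lt lv lA vt by (simp add: cle_nth)
    qed
    then show "T3 v w x t \<and> y = map (fp p) (drop p t)" using yd by simp
  next
    assume a: "T3 v w x t \<and> y = map (fp p) (drop p t)"
    have tN: "t \<in> Nhat (p + (n + m))" using a lv unfolding T3_def by (simp add: add.assoc)
    then have lt: "length t = p + (n + m)" by (rule Nhat_len)
    have c1: "cle v (take p t)" "cle (map (tri p) (nearrow w x)) (drop p t)"
      using a lv unfolding T3_def ne cle_app_l by auto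
    have c2: "cle (take p t) v" "cle (drop p t) (map (\<lambda>a. a + p) (nwarrow w x))"
      using a lv unfolding T3_def nw cle_app_r by auto
    have vt: "take p t = v" using cle_antisym[OF c2(1) c1(1)] .
    have yN: "y \<in> Nhat (n + m)" using a Nhat_drop[OF tN] by simp
    have ly: "length y = n + m" using yN by (rule Nhat_len)
    have b1: "cle (nearrow w x) y \<and> cle y (nwarrow w x)" using L3[OF gA gB c1(2) c2(2)] a by simp
    have b2: "cle (map (tri p) y) (drop p t) \<and> cle (drop p t) (map (\<lambda>a. a + p) y)"
      using L4[OF gA c1(2)] a by simp
    show "Iv w x y \<and> Iv v y t" unfolding Iv_def
    proof (intro conjI)
      show "y \<in> Nhat (length w + length x)" using yN lv by simp
      show "cle (nearrow w x) y" "cle y (nwarrow w x)" using b1 by simp_all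
      show "t \<in> Nhat (length v + length y)" using tN lv ly by simp
      show "cle (nearrow v y) t" unfolding nearrow_def cle_app_l using lt lv ly vt b2
        by (simp add: cle_nth)
      show "cle t (nwarrow v y)" unfolding nwarrow_def cle_app_r using lt lv ly vt b2
        by (simp add: cle_nth)
    qed
  qed
qed



definition spt :: "(nat list \<Rightarrow> 'k::zero) \<Rightarrow> nat list set" where
  "spt f = {x. f x \<noteq> 0}"

lemma starB_ne: "v \<noteq> [] \<Longrightarrow> w \<noteq> [] \<Longrightarrow> starB v w = (\<lambda>t. if Iv v w t then 1 else 0)"
  by (simp add: starB_def Iv_def)

lemma fin_starB: "finite (spt (starB v w :: nat list \<Rightarrow> 'k::{zero,one}))"
proof -
  have "spt (starB v w :: nat list \<Rightarrow> 'k) \<subseteq> {v, w} \<union> Nhat (length v + length w)"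
    by (auto simp: spt_def starB_def basis_def split: if_splits)
  then show ?thesis using Nhat_fin by (meson finite.emptyI finite.insertI finite_UnI finite_subset)
qed

lemma star_sup:
  assumes "finite A" "finite B" "spt f \<subseteq> A" "spt g \<subseteq> B"
  shows "star f g t = (\<Sum>v\<in>A. \<Sum>w\<in>B. f v * g w * starB v w t)"
proof -
  have "star f g t = (\<Sum>v\<in>spt f. \<Sum>w\<in>spt g. f v * g w * starB v w t)"
    by (simp add: star_def spt_def)
  also have "\<dots> = (\<Sum>v\<in>spt f. \<Sum>w\<in>B. f v * g w * starB v w t)"
    by (intro sum.cong refl sum.mono_neutral_left assms) (auto simp: spt_def)
  also have "\<dots> = (\<Sum>v\<in>A. \<Sum>w\<in>B. f v * g w * starB v w t)"
    by (intro sum.mono_neutral_left assms) (auto simp: spt_def)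
  finally show ?thesis .
qed

lemma spt_star:
  fixes f g :: "nat list \<Rightarrow> 'k::comm_ring_1"
  assumes "finite (spt f)" "finite (spt g)"
  shows "spt (star f g) \<subseteq> (\<Union>v\<in>spt f. \<Union>w\<in>spt g. spt (starB v w :: nat list \<Rightarrow> 'k))"
proof
  fix t assume t: "t \<in> spt (star f g)"
  show "t \<in> (\<Union>v\<in>spt f. \<Union>w\<in>spt g. spt (starB v w :: nat list \<Rightarrow> 'k))"
  proof (rule ccontr)
    assume "t \<notin> (\<Union>v\<in>spt f. \<Union>w\<in>spt g. spt (starB v w :: nat list \<Rightarrow> 'k))"
    then have z: "\<forall>v\<in>spt f. \<forall>w\<in>spt g. (starB v w t :: 'k) = 0" by (auto simp: spt_def)
    have "star f g t = (\<Sum>v\<in>spt f. \<Sum>w\<in>spt g. f v * g w * starB v w t)" by (simp add: star_def spt_def)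
    also have "\<dots> = 0" using z by (intro sum.neutral ballI) simp
    finally have "star f g t = 0" .
    then show False using t by (simp add: spt_def)
  qed
qed

lemma sumC:
  assumes "v \<noteq> []" "x \<noteq> []" "finite Y" "spt (starB v w :: nat list \<Rightarrow> 'k::comm_ring_1) \<subseteq> Y" and w: "w \<noteq> []"
  shows "(\<Sum>y\<in>Y. (starB v w y :: 'k) * starB y x t) = (if T3 v w x t then 1 else 0)"
proof -
  define y0 where "y0 = take (length v + length w) t"
  have eq: "(starB v w y :: 'k) * starB y x t = (if y = y0 then (if T3 v w x t then 1 else 0) else 0)" for y
  proof (cases "Iv v w y")
    case True
    then have "y \<in> Nhat (length v + length w)" by (simp add: Iv_def)
    then have "y \<noteq> []" using assms(1) Nhat_len by fastforce
    then show ?thesis using True coreC[of v w y x t] assms(1,2) w by (auto simp: starB_ne y0_def)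
  next
    case False
    then show ?thesis using coreC[of v w y x t] assms(1,2) w by (auto simp: starB_ne y0_def)
  qed
  have "y0 \<in> Y" if "T3 v w x t"
  proof -
    have "Iv v w y0" using coreC[of v w y0 x t] that y0_def by simp
    then show ?thesis using assms(4) w assms(1) by (auto simp: spt_def starB_ne)
  qed
  then show ?thesis unfolding eq using assms(3) by (auto simp: sum.delta)
qed

lemma sumD:
  assumes v: "v \<in> Nhat p" and w: "w \<in> Nhat n" and x: "x \<in> Nhat m" and pnm: "1 \<le> p" "1 \<le> n" "1 \<le> m"
    and "finite Z" "spt (starB w x :: nat list \<Rightarrow> 'k::comm_ring_1) \<subseteq> Z"
  shows "(\<Sum>z\<in>Z. (starB w x z :: 'k) * starB v z t) = (if T3 v w x t then 1 else 0)"
proof -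
  define z0 where "z0 = map (fp p) (drop p t)"
  have ne: "v \<noteq> []" "w \<noteq> []" "x \<noteq> []" using v w x pnm Nhat_len by fastforce+
  have eq: "(starB w x z :: 'k) * starB v z t = (if z = z0 then (if T3 v w x t then 1 else 0) else 0)" for z
  proof (cases "Iv w x z")
    case True
    then have "z \<in> Nhat (length w + length x)" by (simp add: Iv_def)
    then have "z \<noteq> []" using ne Nhat_len by fastforce
    then show ?thesis using True coreD[OF v w x, of z t] ne by (auto simp: starB_ne z0_def)
  next
    case False
    then show ?thesis using coreD[OF v w x, of z t] ne by (auto simp: starB_ne z0_def)
  qed
  have "z0 \<in> Z" if "T3 v w x t"
  proof -
    have "Iv w x z0" using coreD[OF v w x, of z0 t] that z0_def by simp
    then show ?thesis using assms(8) ne by (auto simp: spt_def starB_ne)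
  qed
  then show ?thesis unfolding eq using assms(7) by (auto simp: sum.delta)
qed



lemma sum_swap3: "(\<Sum>z\<in>Z. \<Sum>w\<in>G. \<Sum>x\<in>H. P w x z) = (\<Sum>w\<in>G. \<Sum>x\<in>H. \<Sum>z\<in>Z. P w x z)"
proof -
  have "(\<Sum>z\<in>Z. \<Sum>w\<in>G. \<Sum>x\<in>H. P w x z) = (\<Sum>w\<in>G. \<Sum>z\<in>Z. \<Sum>x\<in>H. P w x z)" by (rule sum.swap)
  also have "\<dots> = (\<Sum>w\<in>G. \<Sum>x\<in>H. \<Sum>z\<in>Z. P w x z)" by (rule sum.cong[OF refl], rule sum.swap)
  finally show ?thesis .
qed

lemma sum_swap4: "(\<Sum>y\<in>Y. \<Sum>x\<in>H. \<Sum>v\<in>F. \<Sum>w\<in>G. P v w x y) = (\<Sum>v\<in>F. \<Sum>w\<in>G. \<Sum>x\<in>H. \<Sum>y\<in>Y. P v w x y)"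
proof -
  have "(\<Sum>y\<in>Y. \<Sum>x\<in>H. \<Sum>v\<in>F. \<Sum>w\<in>G. P v w x y) = (\<Sum>y\<in>Y. \<Sum>v\<in>F. \<Sum>w\<in>G. \<Sum>x\<in>H. P v w x y)"
    by (rule sum.cong[OF refl], rule sum_swap3)
  also have "\<dots> = (\<Sum>v\<in>F. \<Sum>w\<in>G. \<Sum>y\<in>Y. \<Sum>x\<in>H. P v w x y)" by (rule sum_swap3)
  also have "\<dots> = (\<Sum>v\<in>F. \<Sum>w\<in>G. \<Sum>x\<in>H. \<Sum>y\<in>Y. P v w x y)"
    by (rule sum.cong[OF refl], rule sum.cong[OF refl], rule sum.swap)
  finally show ?thesis .
qed

lemma in_span1:
  assumes "in_span {1..} f"
  shows "finite (spt f)" "v \<in> spt f \<Longrightarrow> \<exists>k\<ge>1. v \<in> Nhat k"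
  using assms by (auto simp: in_span_def spt_def)

lemma nhat_ne: "v \<in> Nhat k \<Longrightarrow> 1 \<le> k \<Longrightarrow> v \<noteq> []"
  using Nhat_len by fastforce

lemma assocL:
  fixes f g h :: "nat list \<Rightarrow> 'k::comm_ring_1"
  assumes f: "in_span {1..} f" and g: "in_span {1..} g" and h: "in_span {1..} h"
  shows "star (star f g) h t = (\<Sum>v\<in>spt f. \<Sum>w\<in>spt g. \<Sum>x\<in>spt h. f v * g w * h x * (if T3 v w x t then 1 else 0))"
proof -
  define F where "F = spt f"
  define G where "G = spt g"
  define H where "H = spt h"
  have fin: "finite F" "finite G" "finite H" using in_span1(1) f g h F_def G_def H_def by auto
  define Y where "Y = (\<Union>v\<in>F. \<Union>w\<in>G. spt (starB v w :: nat list \<Rightarrow> 'k))"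
  have finY: "finite Y" unfolding Y_def using fin fin_starB by blast
  have sY: "spt (star f g) \<subseteq> Y" unfolding Y_def F_def G_def using spt_star fin F_def G_def by blast
  have "star (star f g) h t = (\<Sum>y\<in>Y. \<Sum>x\<in>H. star f g y * h x * starB y x t)"
    by (rule star_sup) (use finY fin sY H_def in auto)
  also have "\<dots> = (\<Sum>y\<in>Y. \<Sum>x\<in>H. \<Sum>v\<in>F. \<Sum>w\<in>G. f v * g w * h x * (starB v w y * starB y x t))"
  proof (intro sum.cong refl)
    fix y x
    have "star f g y = (\<Sum>v\<in>F. \<Sum>w\<in>G. f v * g w * starB v w y)"
      by (rule star_sup) (use fin F_def G_def in auto)
    then show "star f g y * h x * starB y x t = (\<Sum>v\<in>F. \<Sum>w\<in>G. f v * g w * h x * (starB v w y * starB y x t))"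
      by (simp add: sum_distrib_right sum_distrib_left mult_ac)
  qed
  also have "\<dots> = (\<Sum>v\<in>F. \<Sum>w\<in>G. \<Sum>x\<in>H. \<Sum>y\<in>Y. f v * g w * h x * (starB v w y * starB y x t))"
    by (rule sum_swap4)
  also have "\<dots> = (\<Sum>v\<in>F. \<Sum>w\<in>G. \<Sum>x\<in>H. f v * g w * h x * (if T3 v w x t then 1 else 0))"
  proof (intro sum.cong refl)
    fix v w x assume v: "v \<in> F" and w: "w \<in> G" and x: "x \<in> H"
    have ne: "v \<noteq> []" "w \<noteq> []" "x \<noteq> []"
      using in_span1(2)[OF f] in_span1(2)[OF g] in_span1(2)[OF h] v w x F_def G_def H_def nhat_ne by blast+
    have "spt (starB v w :: nat list \<Rightarrow> 'k) \<subseteq> Y" unfolding Y_def using v w by blast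
    then have "(\<Sum>y\<in>Y. (starB v w y :: 'k) * starB y x t) = (if T3 v w x t then 1 else 0)"
      using sumC ne finY by blast
    then show "(\<Sum>y\<in>Y. f v * g w * h x * (starB v w y * starB y x t)) = f v * g w * h x * (if T3 v w x t then 1 else 0)"
      by (simp add: sum_distrib_left[symmetric])
  qed
  finally show ?thesis unfolding F_def G_def H_def .
qed

lemma assocR:
  fixes f g h :: "nat list \<Rightarrow> 'k::comm_ring_1"
  assumes f: "in_span {1..} f" and g: "in_span {1..} g" and h: "in_span {1..} h"
  shows "star f (star g h) t = (\<Sum>v\<in>spt f. \<Sum>w\<in>spt g. \<Sum>x\<in>spt h. f v * g w * h x * (if T3 v w x t then 1 else 0))"
proof -
  define F where "F = spt f"
  define G where "G = spt g"
  define H where "H = spt h"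
  have fin: "finite F" "finite G" "finite H" using in_span1(1) f g h F_def G_def H_def by auto
  define Z where "Z = (\<Union>w\<in>G. \<Union>x\<in>H. spt (starB w x :: nat list \<Rightarrow> 'k))"
  have finZ: "finite Z" unfolding Z_def using fin fin_starB by blast
  have sZ: "spt (star g h) \<subseteq> Z" unfolding Z_def G_def H_def using spt_star fin G_def H_def by blast
  have "star f (star g h) t = (\<Sum>v\<in>F. \<Sum>z\<in>Z. f v * star g h z * starB v z t)"
    by (rule star_sup) (use finZ fin sZ F_def in auto)
  also have "\<dots> = (\<Sum>v\<in>F. \<Sum>z\<in>Z. \<Sum>w\<in>G. \<Sum>x\<in>H. f v * g w * h x * (starB w x z * starB v z t))"
  proof (intro sum.cong refl)
    fix v z
    have "star g h z = (\<Sum>w\<in>G. \<Sum>x\<in>H. g w * h x * starB w x z)"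
      by (rule star_sup) (use fin G_def H_def in auto)
    then show "f v * star g h z * starB v z t = (\<Sum>w\<in>G. \<Sum>x\<in>H. f v * g w * h x * (starB w x z * starB v z t))"
      by (simp add: sum_distrib_right sum_distrib_left mult_ac)
  qed
  also have "\<dots> = (\<Sum>v\<in>F. \<Sum>w\<in>G. \<Sum>x\<in>H. \<Sum>z\<in>Z. f v * g w * h x * (starB w x z * starB v z t))"
    by (rule sum.cong[OF refl], rule sum_swap3)
  also have "\<dots> = (\<Sum>v\<in>F. \<Sum>w\<in>G. \<Sum>x\<in>H. f v * g w * h x * (if T3 v w x t then 1 else 0))"
  proof (intro sum.cong refl)
    fix v w x assume v: "v \<in> F" and w: "w \<in> G" and x: "x \<in> H"
    obtain p n m where pnm: "v \<in> Nhat p" "w \<in> Nhat n" "x \<in> Nhat m" "1 \<le> p" "1 \<le> n" "1 \<le> m"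
      using in_span1(2)[OF f] in_span1(2)[OF g] in_span1(2)[OF h] v w x F_def G_def H_def by blast
    have "spt (starB w x :: nat list \<Rightarrow> 'k) \<subseteq> Z" unfolding Z_def using w x by blast
    then have "(\<Sum>z\<in>Z. (starB w x z :: 'k) * starB v z t) = (if T3 v w x t then 1 else 0)"
      using sumD[OF pnm finZ] by blast
    then show "(\<Sum>z\<in>Z. f v * g w * h x * (starB w x z * starB v z t)) = f v * g w * h x * (if T3 v w x t then 1 else 0)"
      by (simp add: sum_distrib_left[symmetric])
  qed
  finally show ?thesis unfolding F_def G_def H_def .
qed



lemma spt_basis: "spt (basis u :: nat list \<Rightarrow> 'k::field) = {u}"
  by (auto simp: spt_def basis_def)

lemma in_span_basis: "u \<in> Nhat p \<Longrightarrow> 1 \<le> p \<Longrightarrow> in_span {1..} (basis u :: nat list \<Rightarrow> 'k::field)"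
  by (auto simp: in_span_def basis_def)

lemma unitL:
  fixes f :: "nat list \<Rightarrow> 'k::field"
  assumes "in_span UNIV f"
  shows "star (basis []) f = f"
proof
  fix t
  have fin: "finite (spt f)" using assms by (simp add: in_span_def spt_def)
  have "star (basis []) f t = (\<Sum>w\<in>spt f. basis [] [] * f w * starB [] w t)"
    unfolding star_def spt_basis[unfolded spt_def] by (simp add: spt_def)
  also have "\<dots> = (\<Sum>w\<in>spt f. if w = t then f w else 0)"
    by (intro sum.cong refl) (auto simp: basis_def starB_def)
  also have "\<dots> = f t" using fin by (simp only: sum.delta) (auto simp: spt_def)
  finally show "star (basis []) f t = f t" .
qed

lemma unitR:
  fixes f :: "nat list \<Rightarrow> 'k::field"
  assumes "in_span UNIV f"
  shows "star f (basis []) = f"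
proof
  fix t
  have fin: "finite (spt f)" using assms by (simp add: in_span_def spt_def)
  have "star f (basis []) t = (\<Sum>w\<in>spt f. f w * basis [] [] * starB w [] t)"
    unfolding star_def spt_basis[unfolded spt_def] by (simp add: spt_def)
  also have "\<dots> = (\<Sum>w\<in>spt f. if w = t then f w else 0)"
    by (intro sum.cong refl) (auto simp: basis_def starB_def)
  also have "\<dots> = f t" using fin by (simp only: sum.delta) (auto simp: spt_def)
  finally show "star f (basis []) t = f t" .
qed

theorem mainTheorem10:
  shows "(\<forall>f g h :: nat list \<Rightarrow> 'k::field_char_0.
            in_span {1..} f \<and> in_span {1..} g \<and> in_span {1..} h \<longrightarrow>
            star (star f g) h = star f (star g h))
       \<and> (\<forall>p n m u v w. 1 \<le> p \<and> 1 \<le> n \<and> 1 \<le> m \<and>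
            u \<in> Nhat p \<and> v \<in> Nhat n \<and> w \<in> Nhat m \<longrightarrow>
            star (star (basis u) (basis v)) (basis w) =
              (\<lambda>t. if t \<in> Nhat (p + n + m) \<and> cle (nearrow (nearrow u v) w) t
                        \<and> cle t (nwarrow (nwarrow u v) w) then 1 else (0::'k)))
       \<and> (\<forall>f :: nat list \<Rightarrow> 'k. in_span UNIV f \<longrightarrow>
            star (basis []) f = f \<and> star f (basis []) = f)"
proof (intro conjI allI impI)
  fix f g h :: "nat list \<Rightarrow> 'k"
  assume a: "in_span {1..} f \<and> in_span {1..} g \<and> in_span {1..} h"
  show "star (star f g) h = star f (star g h)"
    using assocL[of f g h] assocR[of f g h] a by auto
next
  fix p n m u v w
  assume a: "1 \<le> p \<and> 1 \<le> n \<and> 1 \<le> m \<and> u \<in> Nhat p \<and> v \<in> Nhat n \<and> w \<in> Nhat m"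
  have l: "length u = p" "length v = n" "length w = m" using a Nhat_len by auto
  have s: "in_span {1..} (basis u :: nat list \<Rightarrow> 'k)" "in_span {1..} (basis v :: nat list \<Rightarrow> 'k)"
     "in_span {1..} (basis w :: nat list \<Rightarrow> 'k)" using a in_span_basis by blast+
  show "star (star (basis u) (basis v)) (basis w) =
              (\<lambda>t. if t \<in> Nhat (p + n + m) \<and> cle (nearrow (nearrow u v) w) t
                        \<and> cle t (nwarrow (nwarrow u v) w) then 1 else (0::'k))"
  proof
    fix t
    show "star (star (basis u) (basis v)) (basis w) t =
              (if t \<in> Nhat (p + n + m) \<and> cle (nearrow (nearrow u v) w) t
                        \<and> cle t (nwarrow (nwarrow u v) w) then 1 else (0::'k))"
      using assocL[OF s, of t] l unfolding spt_basis by (simp add: T3_def basis_def)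
  qed
next
  fix f :: "nat list \<Rightarrow> 'k"
  assume "in_span UNIV f"
  then show "star (basis []) f = f" "star f (basis []) = f" using unitL unitR by auto
qed

end
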